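(* For every $n$-vertex graph $G$ (with $n\ge 2$), there exists a graph $G'$ with fewer than $n^2$ vertices such that $G$ is an induced subgraph of $G'$ and $G'$ has sd-degeneracy at most $1$.
   Context: For a graph $G$ and distinct vertices $u,v$, let $N_G(u)$ be the open neighborhood and $\mathrm{sd}_G(u,v) := |(N_G(u)\setminus\{v\}) \triangle (N_G(v)\setminus\{u\})|$, where $\triangle$ is symmetric difference of sets. The sd-degeneracy $\mathrm{sdd}(G)$ of a graph $G$ is the smallest non-negative integer $d$ such that either $|V(G)|=1$, or there exist distinct $u,v\in V(G)$ with $\mathrm{sd}_G(u,v)\le d$ and $\mathrm{sdd}(G-v)\le d$. Equivalently, $\mathrm{sdd}(G)\le d$ iff there is an ordering $v_1,\dots,v_n$ of $V(G)$ such that for every $i\in[n-1]$ there is $j>i$ with $\mathrm{sd}_{G_i}(v_i,v_j)\le d$, where $G_i := G-\{v_k : k<i\}$. *)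

theory Defs
  imports Main
begin

definition graph :: "'a set \<Rightarrow> ('a \<times> 'a) set \<Rightarrow> bool" where
  "graph V E \<longleftrightarrow> finite V \<and> E \<subseteq> V \<times> V \<and> sym E \<and> irrefl E"

definition nbhd :: "('a \<times> 'a) set \<Rightarrow> 'a \<Rightarrow> 'a set" where
  "nbhd E u = {w. (u, w) \<in> E}"

definition sd :: "('a \<times> 'a) set \<Rightarrow> 'a \<Rightarrow> 'a \<Rightarrow> nat" where
  "sd E u v = card (((nbhd E u - {v}) - (nbhd E v - {u})) \<union> ((nbhd E v - {u}) - (nbhd E u - {v})))"

definition del_vertex :: "'a set \<Rightarrow> ('a \<times> 'a) set \<Rightarrow> 'a \<Rightarrow> ('a set \<times> ('a \<times> 'a) set)" where
  "del_vertex V E v = (V - {v}, E \<inter> ((V - {v}) \<times> (V - {v})))"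

inductive sdd_le :: "nat \<Rightarrow> 'a set \<Rightarrow> ('a \<times> 'a) set \<Rightarrow> bool" where
  single: "card V = 1 \<Longrightarrow> sdd_le d V E"
| step: "\<lbrakk>u \<in> V; v \<in> V; u \<noteq> v; sd E u v \<le> d;
          sdd_le d (V - {v}) (E \<inter> ((V - {v}) \<times> (V - {v})))\<rbrakk> \<Longrightarrow> sdd_le d V E"

definition sdd :: "'a set \<Rightarrow> ('a \<times> 'a) set \<Rightarrow> nat" where
  "sdd V E = (LEAST d. sdd_le d V E)"

definition induced_subgraph_of ::
  "'a set \<Rightarrow> ('a \<times> 'a) set \<Rightarrow> 'b set \<Rightarrow> ('b \<times> 'b) set \<Rightarrow> bool" where
  "induced_subgraph_of V E V' E' \<longleftrightarrow>
     (\<exists>f. inj_on f V \<and> f ` V \<subseteq> V' \<and>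
          (\<forall>x\<in>V. \<forall>y\<in>V. (f x, f y) \<in> E' \<longleftrightarrow> (x, y) \<in> E))"

end

theory Submission
  imports Defs "HOL-Library.Nat_Bijection"
begin

definition Vp :: "nat \<Rightarrow> (nat\<times>nat) set" where "Vp n = {(a,t). a \<le> t \<and> t < n}"
definition Rp :: "(nat\<Rightarrow>nat\<Rightarrow>bool) \<Rightarrow> nat\<times>nat \<Rightarrow> nat\<times>nat \<Rightarrow> bool" where
  "Rp A p q = (snd q = fst q \<and> A (fst p) (fst q) \<and> snd p \<le> fst q)"
definition Ep :: "(nat\<Rightarrow>nat\<Rightarrow>bool) \<Rightarrow> nat \<Rightarrow> ((nat\<times>nat)\<times>(nat\<times>nat)) set" where
  "Ep A n = {(p,q). p \<in> Vp n \<and> q \<in> Vp n \<and> p \<noteq> q \<and> (Rp A p q \<or> Rp A q p)}"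
definition Fs :: "nat \<Rightarrow> nat \<Rightarrow> (nat\<times>nat) set \<Rightarrow> (nat\<times>nat) set" where
  "Fs n k X = {(j,j)| j. k \<le> j \<and> j < n} \<union> {(a,t). a < t \<and> t < n \<and> k < t} \<union> X"

lemma sd_le1:
  assumes "((nbhd E u - {v}) - (nbhd E v - {u})) \<union> ((nbhd E v - {u}) - (nbhd E u - {v})) \<subseteq> {c}"
  shows "sd E u v \<le> 1"
proof -
  have "sd E u v \<le> card {c}" unfolding sd_def by (rule card_mono[OF _ assms]) simp
  then show ?thesis by simp
qed

lemma step':
  assumes "u \<in> U" "v \<in> U" "u \<noteq> v" "sd (E \<inter> U\<times>U) u v \<le> d"
    "sdd_le d (U - {v}) (E \<inter> (U-{v})\<times>(U-{v}))"
  shows "sdd_le d U (E \<inter> U\<times>U)"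
proof -
  have "E \<inter> U\<times>U \<inter> (U-{v})\<times>(U-{v}) = E \<inter> (U-{v})\<times>(U-{v})" by blast
  then show ?thesis using assms sdd_le.step[of u U v "E \<inter> U\<times>U" d] by simp
qed

lemma ins_step:
  assumes "k < n" "a < k" "(a,k) \<notin> X" "X \<subseteq> {(a,k)|a. a<k}"
    and IH: "sdd_le 1 (Fs n k X) (Ep A n \<inter> Fs n k X \<times> Fs n k X)"
  shows "sdd_le 1 (Fs n k (insert (a,k) X)) (Ep A n \<inter> Fs n k (insert (a,k) X) \<times> Fs n k (insert (a,k) X))"
proof -
  let ?U = "Fs n k (insert (a,k) X)"
  have rem: "?U - {(a,k)} = Fs n k X" using assms unfolding Fs_def by auto
  show ?thesis
  proof (cases "Suc k < n")
    case True
    have sd: "sd (Ep A n \<inter> ?U \<times> ?U) (a, Suc k) (a,k) \<le> 1"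
      apply (rule sd_le1[where c="(k,k)"])
      using assms True unfolding nbhd_def Ep_def Fs_def Rp_def Vp_def by auto
    show ?thesis
      apply (rule step'[where u="(a,Suc k)"])
      using assms True sd IH rem unfolding Fs_def by auto
  next
    case False
    hence kn: "k = n - 1" using assms by simp
    show ?thesis
    proof (cases "X = {}")
      case True
      have sd: "sd (Ep A n \<inter> ?U \<times> ?U) (k,k) (a,k) \<le> 1"
        apply (rule sd_le1[where c="(k,k)"])
        using assms kn True unfolding nbhd_def Ep_def Fs_def Rp_def Vp_def by auto
      show ?thesis
        apply (rule step'[where u="(k,k)"])
        using assms sd IH rem unfolding Fs_def by auto
    next
      case False
      then obtain y where y: "y \<in> X" by auto
      then obtain b where b: "y = (b,k)" "b < k" using assms by auto
      have sd: "sd (Ep A n \<inter> ?U \<times> ?U) y (a,k) \<le> 1"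
        apply (rule sd_le1[where c="(k,k)"])
        using assms kn b y unfolding nbhd_def Ep_def Fs_def Rp_def Vp_def by auto
      show ?thesis
        apply (rule step'[where u=y])
        using assms sd IH rem y b unfolding Fs_def by auto
    qed
  qed
qed

lemma nb1: "k < n \<Longrightarrow> nbhd (Ep A n \<inter> Fs n k {} \<times> Fs n k {}) (k,k) = {(j,j)| j. k<j \<and> j<n \<and> A k j}"
  unfolding nbhd_def Ep_def Fs_def Rp_def Vp_def by auto
lemma nb2: "Suc k < n \<Longrightarrow> nbhd (Ep A n \<inter> Fs n k {} \<times> Fs n k {}) (k,Suc k) = {(j,j)| j. k<j \<and> j<n \<and> A k j}"
  unfolding nbhd_def Ep_def Fs_def Rp_def Vp_def by auto

lemma X_fin: "X \<subseteq> {(a,k::nat)|a. a<k} \<Longrightarrow> finite X"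
  by (rule finite_subset[of _ "(\<lambda>a. (a,k)) ` {..<k}"]) auto

lemma main:
  "k < n \<Longrightarrow> X \<subseteq> {(a,k)|a. a<k} \<Longrightarrow> sdd_le 1 (Fs n k X) (Ep A n \<inter> Fs n k X \<times> Fs n k X)"
proof (induction "n - Suc k" arbitrary: k X)
  case 0
  hence kn: "Suc k = n" by simp
  have base: "sdd_le 1 (Fs n k {}) (Ep A n \<inter> Fs n k {} \<times> Fs n k {})"
  proof (rule sdd_le.single)
    have "Fs n k {} = {(k,k)}" using kn unfolding Fs_def by auto
    then show "card (Fs n k {}) = 1" by simp
  qed
  have "X \<subseteq> {(a,k)|a. a<k} \<longrightarrow> sdd_le 1 (Fs n k X) (Ep A n \<inter> Fs n k X \<times> Fs n k X)"
    using X_fin[OF 0(3)]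
  proof (induction X rule: finite_induct)
    case empty then show ?case using base by simp
  next
    case (insert x F)
    show ?case
    proof
      assume s: "insert x F \<subseteq> {(a,k)|a. a<k}"
      then obtain a where a: "x = (a,k)" "a < k" by auto
      show "sdd_le 1 (Fs n k (insert x F)) (Ep A n \<inter> Fs n k (insert x F) \<times> Fs n k (insert x F))"
        using ins_step[of k n a F A] insert s a 0 by auto
    qed
  qed
  then show ?case using 0 by simp
next
  case (Suc m)
  have IH: "sdd_le 1 (Fs n (Suc k) Y) (Ep A n \<inter> Fs n (Suc k) Y \<times> Fs n (Suc k) Y)"
    if "Y \<subseteq> {(a,Suc k)|a. a<Suc k}" for Y
  proof -
    have kn: "Suc k < n" using Suc.hyps(2) by simp
    have "m = n - Suc (Suc k)" using Suc.hyps(2) by simp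
    then show ?thesis using Suc.hyps(1)[of "Suc k" Y, OF _ kn that] by simp
  qed
  have kn: "Suc k < n" using Suc.hyps(2) by simp
  let ?U = "Fs n k {}"
  let ?Y = "{(a,Suc k)|a. a<Suc k}"
  have rem: "?U - {(k,k)} = Fs n (Suc k) ?Y" using kn unfolding Fs_def by auto
  have sd: "sd (Ep A n \<inter> ?U \<times> ?U) (k, Suc k) (k,k) \<le> 1"
    apply (rule sd_le1[where c="(k,k)"])
    using kn unfolding nb1[OF Suc_lessD[OF kn]] nb2[OF kn] by auto
  have base: "sdd_le 1 ?U (Ep A n \<inter> ?U \<times> ?U)"
    apply (rule step'[where u="(k,Suc k)" and v="(k,k)"])
    subgoal using kn unfolding Fs_def by auto
    subgoal using kn unfolding Fs_def by auto
    subgoal by simp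
    subgoal by (rule sd)
    subgoal unfolding rem by (rule IH) auto
    done
  have "X \<subseteq> {(a,k)|a. a<k} \<longrightarrow> sdd_le 1 (Fs n k X) (Ep A n \<inter> Fs n k X \<times> Fs n k X)"
    using X_fin[OF Suc(4)]
  proof (induction X rule: finite_induct)
    case empty then show ?case using base by simp
  next
    case (insert x F)
    show ?case
    proof
      assume s: "insert x F \<subseteq> {(a,k)|a. a<k}"
      then obtain a where a: "x = (a,k)" "a < k" by auto
      show "sdd_le 1 (Fs n k (insert x F)) (Ep A n \<inter> Fs n k (insert x F) \<times> Fs n k (insert x F))"
        using ins_step[of k n a F A] insert s a Suc by auto
    qed
  qed
  then show ?case using Suc by simp
qed

lemma transfer:
  assumes "inj h"
  shows "sdd_le d V E \<Longrightarrow> E \<subseteq> V \<times> V \<Longrightarrow> sdd_le d (h ` V) (map_prod h h ` E)"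
proof (induction rule: sdd_le.induct)
  case (single V d E)
  have "card (h ` V) = 1" using single card_image[OF inj_on_subset[OF assms subset_UNIV]] by simp
  then show ?case by (rule sdd_le.single)
next
  case (step u V v E d)
  have nb: "nbhd (map_prod h h ` E) (h x) = h ` nbhd E x" for x
    using assms unfolding nbhd_def inj_def by force
  have sdeq: "sd (map_prod h h ` E) (h u) (h v) = sd E u v"
  proof -
    let ?A = "nbhd E u" and ?B = "nbhd E v"
    have "((h ` ?A - {h v}) - (h ` ?B - {h u})) \<union> ((h ` ?B - {h u}) - (h ` ?A - {h v}))
      = h ` (((?A - {v}) - (?B - {u})) \<union> ((?B - {u}) - (?A - {v})))"
      using assms unfolding inj_def by blast
    then show ?thesis unfolding sd_def nb
      using card_image[OF inj_on_subset[OF assms subset_UNIV]] by simp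
  qed
  have s1: "h ` V - {h v} = h ` (V - {v})" using assms by (simp add: image_set_diff)
  have s2: "map_prod h h ` E \<inter> (h ` V - {h v}) \<times> (h ` V - {h v})
       = map_prod h h ` (E \<inter> (V - {v}) \<times> (V - {v}))"
    unfolding s1 using step.prems assms by (auto simp: inj_image_mem_iff inj_eq[OF assms] image_iff)
  have "sdd_le d (h ` V - {h v}) (map_prod h h ` E \<inter> (h ` V - {h v}) \<times> (h ` V - {h v}))"
  proof -
    have "sdd_le d (h ` (V - {v})) (map_prod h h ` (E \<inter> (V - {v}) \<times> (V - {v})))"
      using step.IH by blast
    then show ?thesis using s1 s2 by metis
  qed
  then show ?case
    using step sdeq sdd_le.step[of "h u" "h ` V" "h v" "map_prod h h ` E" d] assms
    by (auto simp: inj_def)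
qed

lemma Vp_fin: "finite (Vp n)"
  by (rule finite_subset[of _ "{..<n} \<times> {..<n}"]) (auto simp: Vp_def)

lemma Vp_card: "2 \<le> n \<Longrightarrow> card (Vp n) < n^2"
proof -
  assume n: "2 \<le> n"
  have "Vp n \<subset> {..<n} \<times> {..<n}"
  proof
    show "Vp n \<subseteq> {..<n} \<times> {..<n}" by (auto simp: Vp_def)
    have "(1,0) \<in> {..<n} \<times> {..<n::nat}" "(1,0) \<notin> Vp n" using n by (auto simp: Vp_def)
    then show "Vp n \<noteq> {..<n} \<times> {..<n}" by blast
  qed
  then have "card (Vp n) < card ({..<n} \<times> {..<n})" by (rule psubset_card_mono[rotated]) simp
  then show ?thesis by (simp add: power2_eq_square)
qed

lemma Vp_Fs: "Vp n = Fs n 0 {}" unfolding Vp_def Fs_def by auto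

lemma Ep_sub: "Ep A n \<subseteq> Vp n \<times> Vp n" unfolding Ep_def by auto

lemma Ep_sdd: "0 < n \<Longrightarrow> sdd_le 1 (Vp n) (Ep A n)"
proof -
  assume "0 < n"
  then have "sdd_le 1 (Fs n 0 {}) (Ep A n \<inter> Fs n 0 {} \<times> Fs n 0 {})" by (intro main) auto
  moreover have "Ep A n \<inter> Vp n \<times> Vp n = Ep A n" using Ep_sub by blast
  ultimately show ?thesis by (simp add: Vp_Fs[symmetric])
qed

theorem proposition1p1:
  fixes V :: "'a set" and E :: "('a \<times> 'a) set"
  assumes "graph V E" and "card V \<ge> 2"
  shows "\<exists>(V' :: nat set) E'. graph V' E' \<and> card V' < (card V)^2 \<and>
           induced_subgraph_of V E V' E' \<and> sdd V' E' \<le> 1"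
proof -
  define n where "n = card V"
  have fin: "finite V" and Esub: "E \<subseteq> V \<times> V" and Esym: "sym E" and Eirr: "irrefl E"
    using assms(1) unfolding graph_def by auto
  obtain g where g: "bij_betw g {0..<n} V" using ex_bij_betw_nat_finite[OF fin] n_def by blast
  define A where "A i j = ((g i, g j) \<in> E)" for i j
  define h :: "nat \<times> nat \<Rightarrow> nat" where "h = prod_encode"
  have hinj: "inj h" unfolding h_def by (rule inj_prod_encode)
  define V' where "V' = h ` Vp n"
  define E' where "E' = map_prod h h ` Ep A n"
  have n2: "2 \<le> n" using assms(2) n_def by simp
  have "graph V' E'"
    unfolding graph_def
  proof (intro conjI)
    show "finite V'" unfolding V'_def using Vp_fin by simp
    show "E' \<subseteq> V' \<times> V'" unfolding E'_def V'_def using Ep_sub by auto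
    show "sym E'" unfolding E'_def sym_def Ep_def by auto
    show "irrefl E'" unfolding E'_def irrefl_def Ep_def using hinj by (auto simp: inj_eq)
  qed
  moreover have "card V' < (card V)^2"
    unfolding V'_def n_def[symmetric] using Vp_card[OF n2] card_image[OF inj_on_subset[OF hinj subset_UNIV]]
    by simp
  moreover have "sdd V' E' \<le> 1"
  proof -
    have "sdd_le 1 V' E'" unfolding V'_def E'_def
      using transfer[OF hinj Ep_sdd Ep_sub] n2 by simp
    then show ?thesis unfolding sdd_def by (rule Least_le)
  qed
  moreover have "induced_subgraph_of V E V' E'"
  proof -
    define gi where "gi = the_inv_into {0..<n} g"
    have gi: "bij_betw gi V {0..<n}" unfolding gi_def by (rule bij_betw_the_inv_into[OF g])
    have ggi: "g (gi x) = x" if "x \<in> V" for x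
      unfolding gi_def using g that by (simp add: bij_betw_def f_the_inv_into_f)
    define f where "f x = h (gi x, gi x)" for x
    have gii: "inj_on gi V" using gi by (rule bij_betw_imp_inj_on)
    have gir: "gi x < n" if "x \<in> V" for x using bij_betw_apply[OF gi that] by simp
    have "inj_on f V"
      using gii unfolding inj_on_def f_def by (simp add: inj_eq[OF hinj])
    moreover have "f ` V \<subseteq> V'"
      unfolding f_def V'_def Vp_def using gir by auto
    moreover have "(f x, f y) \<in> E' \<longleftrightarrow> (x, y) \<in> E" if x: "x \<in> V" and y: "y \<in> V" for x y
    proof -
      have "(f x, f y) \<in> E' \<longleftrightarrow> ((gi x, gi x), (gi y, gi y)) \<in> Ep A n"
        unfolding E'_def f_def using hinj by (auto simp: inj_eq)
      also have "\<dots> \<longleftrightarrow> (x, y) \<in> E"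
      proof -
        have ix: "gi x < n" and iy: "gi y < n" using gir x y by auto
        have eq: "gi x = gi y \<longleftrightarrow> x = y" using gii x y unfolding inj_on_def by auto
        have Axy: "A (gi x) (gi y) \<longleftrightarrow> (x,y) \<in> E" and Ayx: "A (gi y) (gi x) \<longleftrightarrow> (y,x) \<in> E"
          unfolding A_def using ggi x y by auto
        have "(x,y) \<in> E \<longleftrightarrow> (y,x) \<in> E" using Esym unfolding sym_def by blast
        moreover have "(x,x) \<notin> E" using Eirr unfolding irrefl_def by blast
        ultimately show ?thesis using ix iy eq Axy Ayx unfolding Ep_def Rp_def Vp_def by auto
      qed
      finally show ?thesis .
    qed
    ultimately show ?thesis unfolding induced_subgraph_of_def by blast
  qed
  ultimately show ?thesis by blast
qed

end
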